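(* Let $H$ be a history generated by KSFTM and $T_i$ a transaction of $H$. If (after the last event of $H$) $tutl_i < ct_i$, then there exists a transaction $T_j$ committed in $H$ with $wts_j > wts_i$.
   Context: Algorithm KSFTM (parameters $K\ge1$, $C>0$, $incVal\ge1$). Global atomic counter $G\_tCntr$, initially 1. Each t-object $x$ stores at most $K$ versions $\langle ts, val, rl, vrt\rangle$; initially $\langle 0,0,\emptyset,0\rangle$; a version with timestamp $ts>0$ is installed only by a committing transaction $T_j$ as $\langle wts_j, v, \emptyset, tltl_j\rangle$. Transaction $T_i$ has $its_i, cts_i, wts_i$, limits $tltl_i, tutl_i$, commit time $ct_i$, flag $valid_i$, status. begin($its$): $cts_i$ := counter value, counter atomically incremented; $its_i := cts_i$ if $its$ nil else $its$; $wts_i := cts_i + C(cts_i-its_i)$; $tltl_i := cts_i$; $tutl_i := ct_i := \infty$. read($x$) (non-local): $cur$ := version with largest $ts < wts_i$ (abort if none); if a version $next$ with smallest $ts>wts_i$ exists, $tutl_i := \min(tutl_i, next.vrt-1)$; $tltl_i := \max(tltl_i, cur.vrt+1)$; abort if $tltl_i > tutl_i$; otherwise record the read in $cur.rl$. tryC: abort if $valid_i$ false; for written $x$: $prev_x$ (largest $ts<wts_i$, abort if none), $next_x$ (smallest $ts>wts_i$); conflict checks against readers of $prev_x$ with larger $wts$ (abort $T_i$ or mark them); $tltl_i := \max(tltl_i, prev_x.vrt+1)$, $tutl_i := \min(tutl_i, next_x.vrt-1)$; $ct_i$ := counter atomically increased by $incVal$ (new value); $tutl_i := \min(tutl_i,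 ct_i)$; abort if $tltl_i > tutl_i$; checks against readers $T_k$ of $prev_x$ with smaller $wts$ and $tltl_k \ge tutl_i$ (abort $T_i$ or mark $T_k$); then $tltl_i := tutl_i$; for such unaborted readers $T_k$, $tutl_k := \min(tutl_k, tltl_i-1)$; invalidate marked transactions; install for each written $x$ the version $\langle wts_i, v, \emptyset, tltl_i\rangle$; commit. abort: $valid_i$ false, status abort. *)

theory Defs
  imports Main "HOL-Library.Extended_Real"
begin

text \<open>Transactions are identified by natural numbers, t-objects have type 'x,
  values have type 'v (with initial value 0).  Each operation
  (begin, read, write, tryC, abort) is one atomic step.\<close>

datatype status = Live | Committed | Aborted

record 'v version =
  vts  :: real
  vval :: 'v
  vrl  :: "nat set"
  vvrt :: ereal

record ('x, 'v) txn =
  t_its    :: nat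
  t_cts    :: nat
  t_wts    :: real
  t_tltl   :: ereal
  t_tutl   :: ereal
  t_ct     :: ereal
  t_valid  :: bool
  t_status :: status
  t_wset   :: "'x \<Rightarrow> 'v option"

record ('x, 'v) state =
  cntr  :: nat
  store :: "'x \<Rightarrow> 'v version set"
  txs   :: "nat \<Rightarrow> ('x, 'v) txn option"

datatype ('x, 'v) event =
    Begin nat
  | Read nat 'x 'v
  | ReadAbort nat 'x
  | Write nat 'x 'v
  | Commit nat
  | TryCAbort nat
  | AbortEv nat

definition init_state :: "('x, 'v::zero) state" where
  "init_state = \<lparr> cntr = 1,
     store = (\<lambda>x. {\<lparr>vts = 0, vval = 0, vrl = {}, vvrt = 0\<rparr>}),
     txs = (\<lambda>i. None) \<rparr>"

definition has_prev :: "'v version set \<Rightarrow> real \<Rightarrow> bool" where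
  "has_prev V w \<longleftrightarrow> (\<exists>u\<in>V. vts u < w)"

definition is_prev :: "'v version set \<Rightarrow> real \<Rightarrow> 'v version \<Rightarrow> bool" where
  "is_prev V w c \<longleftrightarrow> c \<in> V \<and> vts c < w \<and> (\<forall>u\<in>V. vts u < w \<longrightarrow> vts u \<le> vts c)"

definition prev_v :: "'v version set \<Rightarrow> real \<Rightarrow> 'v version" where
  "prev_v V w = (SOME c. is_prev V w c)"

definition is_next :: "'v version set \<Rightarrow> real \<Rightarrow> 'v version \<Rightarrow> bool" where
  "is_next V w c \<longleftrightarrow> c \<in> V \<and> w < vts c \<and> (\<forall>u\<in>V. w < vts u \<longrightarrow> vts c \<le> vts u)"

definition nxt_lim :: "'v version set \<Rightarrow> real \<Rightarrow> ereal" where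
  "nxt_lim V w = (if \<exists>c. is_next V w c then vvrt (SOME c. is_next V w c) - 1 else \<infinity>)"

definition abort_tx :: "('x, 'v) txn \<Rightarrow> ('x, 'v) txn" where
  "abort_tx t = t\<lparr>t_valid := False, t_status := Aborted\<rparr>"

definition wset_dom :: "('x, 'v) txn \<Rightarrow> 'x set" where
  "wset_dom t = {x. t_wset t x \<noteq> None}"

definition lo_lim :: "('x, 'v) state \<Rightarrow> 'x set \<Rightarrow> real \<Rightarrow> ereal" where
  "lo_lim s S w = (SUP x\<in>S. vvrt (prev_v (store s x) w) + 1)"

definition hi_lim :: "('x, 'v) state \<Rightarrow> 'x set \<Rightarrow> real \<Rightarrow> ereal" where
  "hi_lim s S w = (INF x\<in>S. nxt_lim (store s x) w)"

definition readers :: "('x, 'v) state \<Rightarrow> 'x set \<Rightarrow> real \<Rightarrow> nat set" where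
  "readers s S w = (\<Union>x\<in>S. vrl (prev_v (store s x) w))"

definition trimK :: "nat \<Rightarrow> 'v version set \<Rightarrow> 'v version set" where
  "trimK K V = (if card V > K then V - {SOME u. u \<in> V \<and> (\<forall>v\<in>V. vts u \<le> vts v)} else V)"

definition upd_tx :: "('x, 'v) state \<Rightarrow> nat \<Rightarrow> ('x, 'v) txn \<Rightarrow> ('x, 'v) state" where
  "upd_tx s i t = s\<lparr>txs := (txs s)(i \<mapsto> t)\<rparr>"

inductive ksftm_step ::
  "nat \<Rightarrow> real \<Rightarrow> nat \<Rightarrow> ('x, 'v) state \<Rightarrow> ('x, 'v) event \<Rightarrow> ('x, 'v) state \<Rightarrow> bool"
  for K :: nat and C :: real and incVal :: nat where
  begin_new:
    "txs s i = None \<Longrightarrow>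
     ksftm_step K C incVal s (Begin i)
       (s\<lparr>cntr := cntr s + 1,
          txs := (txs s)(i \<mapsto> \<lparr> t_its = cntr s, t_cts = cntr s, t_wts = real (cntr s),
             t_tltl = ereal (real (cntr s)), t_tutl = \<infinity>, t_ct = \<infinity>, t_valid = True,
             t_status = Live, t_wset = (\<lambda>x. None) \<rparr>)\<rparr>)"
| begin_retry:
    "\<lbrakk> txs s i = None; txs s k = Some tk; t_status tk = Aborted; its = t_its tk \<rbrakk> \<Longrightarrow>
     ksftm_step K C incVal s (Begin i)
       (s\<lparr>cntr := cntr s + 1,
          txs := (txs s)(i \<mapsto> \<lparr> t_its = its, t_cts = cntr s,
             t_wts = real (cntr s) + C * (real (cntr s) - real its),
             t_tltl = ereal (real (cntr s)), t_tutl = \<infinity>, t_ct = \<infinity>, t_valid = True,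
             t_status = Live, t_wset = (\<lambda>x. None) \<rparr>)\<rparr>)"
| read_local:
    "\<lbrakk> txs s i = Some t; t_status t = Live; t_wset t x = Some v \<rbrakk> \<Longrightarrow>
     ksftm_step K C incVal s (Read i x v) s"
| read_noprev:
    "\<lbrakk> txs s i = Some t; t_status t = Live; t_wset t x = None;
       \<not> has_prev (store s x) (t_wts t) \<rbrakk> \<Longrightarrow>
     ksftm_step K C incVal s (ReadAbort i x) (upd_tx s i (abort_tx t))"
| read_abort:
    "\<lbrakk> txs s i = Some t; t_status t = Live; t_wset t x = None;
       has_prev (store s x) (t_wts t);
       c = prev_v (store s x) (t_wts t);
       tl' = max (t_tltl t) (vvrt c + 1);
       tu' = min (t_tutl t) (nxt_lim (store s x) (t_wts t));
       tl' > tu' \<rbrakk> \<Longrightarrow>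
     ksftm_step K C incVal s (ReadAbort i x)
       (upd_tx s i (abort_tx (t\<lparr>t_tltl := tl', t_tutl := tu'\<rparr>)))"
| read_ok:
    "\<lbrakk> txs s i = Some t; t_status t = Live; t_wset t x = None;
       has_prev (store s x) (t_wts t);
       c = prev_v (store s x) (t_wts t);
       tl' = max (t_tltl t) (vvrt c + 1);
       tu' = min (t_tutl t) (nxt_lim (store s x) (t_wts t));
       tl' \<le> tu' \<rbrakk> \<Longrightarrow>
     ksftm_step K C incVal s (Read i x (vval c))
       (upd_tx (s\<lparr>store := (store s)(x := (store s x - {c}) \<union> {c\<lparr>vrl := insert i (vrl c)\<rparr>})\<rparr>)
          i (t\<lparr>t_tltl := tl', t_tutl := tu'\<rparr>))"
| write_step:
    "\<lbrakk> txs s i = Some t; t_status t = Live \<rbrakk> \<Longrightarrow>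
     ksftm_step K C incVal s (Write i x v) (upd_tx s i (t\<lparr>t_wset := (t_wset t)(x \<mapsto> v)\<rparr>))"
| tryc_invalid:
    "\<lbrakk> txs s i = Some t; t_status t = Live; \<not> t_valid t \<rbrakk> \<Longrightarrow>
     ksftm_step K C incVal s (TryCAbort i) (upd_tx s i (abort_tx t))"
| tryc_abort_early:
    "\<lbrakk> txs s i = Some t; t_status t = Live; t_valid t;
       S \<subseteq> wset_dom t; \<forall>x\<in>S. has_prev (store s x) (t_wts t) \<rbrakk> \<Longrightarrow>
     ksftm_step K C incVal s (TryCAbort i)
       (upd_tx s i (abort_tx (t\<lparr>t_tltl := max (t_tltl t) (lo_lim s S (t_wts t)),
                                t_tutl := min (t_tutl t) (hi_lim s S (t_wts t))\<rparr>)))"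
| tryc_abort_late:
    "\<lbrakk> txs s i = Some t; t_status t = Live; t_valid t; W = wset_dom t;
       \<forall>x\<in>W. has_prev (store s x) (t_wts t);
       tl1 = max (t_tltl t) (lo_lim s W (t_wts t));
       ctv = cntr s + incVal;
       tu2 = min (min (t_tutl t) (hi_lim s W (t_wts t))) (ereal (real ctv)) \<rbrakk> \<Longrightarrow>
     ksftm_step K C incVal s (TryCAbort i)
       (upd_tx (s\<lparr>cntr := ctv\<rparr>) i
          (abort_tx (t\<lparr>t_tltl := tl1, t_tutl := tu2, t_ct := ereal (real ctv)\<rparr>)))"
| tryc_commit:
    "\<lbrakk> txs s i = Some t; t_status t = Live; t_valid t; W = wset_dom t; w = t_wts t;
       \<forall>x\<in>W. has_prev (store s x) w;
       tl1 = max (t_tltl t) (lo_lim s W w);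
       ctv = cntr s + incVal;
       tu2 = min (min (t_tutl t) (hi_lim s W w)) (ereal (real ctv));
       tl1 \<le> tu2;
       R = readers s W w;
       \<forall>k\<in>M. k \<in> R \<and> k \<noteq> i \<and> (\<exists>tk. txs s k = Some tk \<and> t_status tk = Live \<and>
                 (t_wts tk > w \<or> (t_wts tk < w \<and> t_tltl tk \<ge> tu2))) \<rbrakk> \<Longrightarrow>
     ksftm_step K C incVal s (Commit i)
       (s\<lparr>cntr := ctv,
          store := (\<lambda>x. if x \<in> W
                        then trimK K (insert \<lparr>vts = w, vval = the (t_wset t x), vrl = {}, vvrt = tu2\<rparr>
                                               (store s x))
                        else store s x),
          txs := (\<lambda>k. if k = i
                       then Some (t\<lparr>t_tltl := tu2, t_tutl := tu2, t_ct := ereal (real ctv),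
                                     t_status := Committed\<rparr>)
                       else map_option (\<lambda>tk. tk\<lparr>
                              t_valid := (t_valid tk \<and> k \<notin> M),
                              t_tutl := (if k \<in> R \<and> k \<notin> M \<and> t_wts tk < w \<and> t_status tk \<noteq> Aborted
                                         then min (t_tutl tk) (tu2 - 1) else t_tutl tk)\<rparr>)
                            (txs s k))\<rparr>)"
| abort_step:
    "\<lbrakk> txs s i = Some t; t_status t = Live \<rbrakk> \<Longrightarrow>
     ksftm_step K C incVal s (AbortEv i) (upd_tx s i (abort_tx t))"

inductive ksftm_exec ::
  "nat \<Rightarrow> real \<Rightarrow> nat \<Rightarrow> ('x, 'v) state \<Rightarrow> ('x, 'v) event list \<Rightarrow> ('x, 'v) state \<Rightarrow> bool"
  for K :: nat and C :: real and incVal :: nat where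
  exec_nil: "ksftm_exec K C incVal s [] s"
| exec_snoc: "\<lbrakk> ksftm_exec K C incVal s H s'; ksftm_step K C incVal s' e s'' \<rbrakk> \<Longrightarrow>
              ksftm_exec K C incVal s (H @ [e]) s''"

definition ksftm_history ::
  "nat \<Rightarrow> real \<Rightarrow> nat \<Rightarrow> ('x, 'v::zero) event list \<Rightarrow> ('x, 'v) state \<Rightarrow> bool" where
  "ksftm_history K C incVal H s \<longleftrightarrow> ksftm_exec K C incVal init_state H s"

end

theory Submission
  imports Defs
begin

definition committed_gt :: "('x, 'v) state \<Rightarrow> real \<Rightarrow> bool" where
  "committed_gt s w \<longleftrightarrow> (\<exists>j tj. txs s j = Some tj \<and> t_status tj = Committed \<and> t_wts tj > w)"

definition committed_eq :: "('x, 'v) state \<Rightarrow> real \<Rightarrow> bool" where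
  "committed_eq s w \<longleftrightarrow> (\<exists>j tj. txs s j = Some tj \<and> t_status tj = Committed \<and> t_wts tj = w)"

definition txok :: "('x, 'v) state \<Rightarrow> ('x, 'v) txn \<Rightarrow> bool" where
  "txok s t \<longleftrightarrow> t_its t \<le> cntr s \<and> t_wts t > 0 \<and>
        (t_status t = Live \<longrightarrow> t_ct t = \<infinity>) \<and>
        (t_tutl t < t_ct t \<longrightarrow> committed_gt s (t_wts t))"

definition inv :: "('x, 'v) state \<Rightarrow> bool" where
  "inv s \<longleftrightarrow> cntr s \<ge> 1 \<and> (\<forall>y. finite (store s y)) \<and>
    (\<forall>i t. txs s i = Some t \<longrightarrow> t_its t \<le> cntr s \<and> t_wts t > 0 \<and>
        (t_status t = Live \<longrightarrow> t_ct t = \<infinity>) \<and>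
        (t_tutl t < t_ct t \<longrightarrow> committed_gt s (t_wts t))) \<and>
    (\<forall>x u. u \<in> store s x \<longrightarrow> vts u \<le> 0 \<or> committed_eq s (vts u))"

lemma nxt_lim_fin:
  assumes "nxt_lim V w < \<infinity>"
  shows "\<exists>c\<in>V. vts c > w"
proof -
  have "\<exists>c. is_next V w c" using assms unfolding nxt_lim_def by (auto split: if_splits)
  then show ?thesis unfolding is_next_def by auto
qed

lemma hi_lim_fin:
  assumes "hi_lim s S w < \<infinity>"
  shows "\<exists>x\<in>S. \<exists>c\<in>store s x. vts c > w"
proof (rule ccontr)
  assume nt: "\<not> ?thesis"
  have "\<forall>x\<in>S. nxt_lim (store s x) w = \<infinity>"
  proof
    fix x assume "x \<in> S"
    have "\<not> nxt_lim (store s x) w < \<infinity>" using nxt_lim_fin nt \<open>x \<in> S\<close> by blast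
    then show "nxt_lim (store s x) w = \<infinity>" by (cases "nxt_lim (store s x) w") auto
  qed
  then have "hi_lim s S w = (INF x\<in>S. (top::ereal))" unfolding hi_lim_def
    by (intro INF_cong) (auto simp: top_ereal_def)
  also have "(INF x\<in>S. (top::ereal)) = top" by (simp add: INF_top_conv)
  finally have "hi_lim s S w = \<infinity>" by (simp add: top_ereal_def)
  with assms show False by simp
qed

lemma store_gt:
  assumes "inv s" "c \<in> store s x" "vts c > w" "w > 0"
  shows "committed_gt s w"
proof -
  have "vts c \<le> 0 \<or> committed_eq s (vts c)" using assms(1,2) unfolding inv_def by blast
  then show ?thesis using assms(3,4) unfolding committed_eq_def committed_gt_def by force
qed

lemma step_committed:
  assumes "ksftm_step K C incVal s e s'" "txs s j = Some tj" "t_status tj = Committed"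
  shows "\<exists>tj'. txs s' j = Some tj' \<and> t_status tj' = Committed \<and> t_wts tj' = t_wts tj"
  using assms by (cases rule: ksftm_step.cases) (auto simp: upd_tx_def abort_tx_def)

lemma step_committed_gt:
  assumes "ksftm_step K C incVal s e s'" "committed_gt s w"
  shows "committed_gt s' w"
  using assms step_committed unfolding committed_gt_def by metis

lemma step_committed_eq:
  assumes "ksftm_step K C incVal s e s'" "committed_eq s w"
  shows "committed_eq s' w"
  using assms step_committed unfolding committed_eq_def by metis

lemma step_cntr:
  assumes "ksftm_step K C incVal s e s'"
  shows "cntr s \<le> cntr s'"
  using assms by (cases rule: ksftm_step.cases) (auto simp: upd_tx_def)

lemma trimK_sub: "trimK K V \<subseteq> V"
  unfolding trimK_def by auto

lemma prev_in:
  assumes "finite V" "has_prev V w"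
  shows "prev_v V w \<in> V"
proof -
  let ?A = "{u\<in>V. vts u < w}"
  have fA: "finite (vts ` ?A)" using assms(1) by simp
  have neA: "vts ` ?A \<noteq> {}" using assms(2) unfolding has_prev_def by auto
  have "Max (vts ` ?A) \<in> vts ` ?A" using Max_in[OF fA neA] .
  then obtain c where c: "c \<in> ?A" "vts c = Max (vts ` ?A)" by auto
  have "is_prev V w c" unfolding is_prev_def using c Max_ge[OF fA] by auto
  then have "is_prev V w (prev_v V w)" unfolding prev_v_def by (rule someI)
  then show ?thesis unfolding is_prev_def by simp
qed

lemma step_store:
  assumes "ksftm_step K C incVal s e s'" "u \<in> store s' x" "\<forall>y. finite (store s y)"
  shows "(\<exists>u0\<in>store s x. vts u0 = vts u) \<or> committed_eq s' (vts u)"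
  using assms
proof (cases rule: ksftm_step.cases)
  case (read_ok i t x' c tl' tu')
  then have "c \<in> store s x'" using prev_in assms(3) by blast
  then show ?thesis using assms(2) read_ok by (auto simp: upd_tx_def split: if_splits)
next
  case (tryc_commit i t W w tl1 ctv tu2 R M)
  show ?thesis
  proof (cases "x \<in> W")
    case True
    then have "u \<in> insert \<lparr>vts = w, vval = the (t_wset t x), vrl = {}, vvrt = tu2\<rparr> (store s x)"
      using assms(2) tryc_commit trimK_sub by fastforce
    then show ?thesis
    proof
      assume "u = \<lparr>vts = w, vval = the (t_wset t x), vrl = {}, vvrt = tu2\<rparr>"
      then have "vts u = w" by simp
      then show ?thesis using tryc_commit unfolding committed_eq_def by (auto intro!: exI[of _ i])
    qed auto
  next
    case False
    then show ?thesis using assms(2) tryc_commit by auto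
  qed
qed (auto simp: upd_tx_def)

lemma step_finite:
  assumes "ksftm_step K C incVal s e s'" "\<forall>y. finite (store s y)"
  shows "\<forall>y. finite (store s' y)"
  using assms
proof (cases rule: ksftm_step.cases)
  case (tryc_commit i t W w tl1 ctv tu2 R M)
  have "finite (trimK K (insert a (store s y)))" for a y
    using assms(2) trimK_sub[of K "insert a (store s y)"] by (meson finite_insert finite_subset)
  then show ?thesis using tryc_commit assms(2) by auto
qed (auto simp: upd_tx_def)

lemma inv_txok: "inv s \<Longrightarrow> txs s i = Some t \<Longrightarrow> txok s t"
  unfolding inv_def txok_def by blast

lemma keep:
  assumes "inv s" "ksftm_step K C incVal s e s'" "txs s i = Some t"
    "t_its t' = t_its t" "t_wts t' = t_wts t" "t_ct t' = t_ct t" "t_tutl t' = t_tutl t"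
    "t_status t' = Live \<Longrightarrow> t_status t = Live"
  shows "txok s' t'"
proof -
  have "txok s t" using inv_txok assms(1,3) by blast
  then show ?thesis using assms step_cntr[OF assms(2)] step_committed_gt[OF assms(2)]
    unfolding txok_def by (metis order_trans)
qed

lemma min_lt: "min (a::ereal) b < c \<Longrightarrow> a < c \<or> b < c"
  by (simp add: min_less_iff_disj)

lemma lt_inf: "(a::ereal) < c \<Longrightarrow> a < \<infinity>"
  using ereal_less_PInfty less_le_trans by fastforce

lemma step_txs:
  assumes inv: "inv s" and Cp: "C > 0" and st: "ksftm_step K C incVal s e s'"
    and ti: "txs s' j = Some t'"
  shows "txok s' t'"
  using st
proof (cases rule: ksftm_step.cases)
  case (begin_new i)
  show ?thesis
  proof (cases "j = i")
    case True
    moreover have "cntr s \<ge> 1" using inv unfolding inv_def by simp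
    ultimately show ?thesis using ti begin_new unfolding txok_def by auto
  next
    case False
    then show ?thesis using keep[OF inv st, of j _ t'] ti begin_new by auto
  qed
next
  case (begin_retry i k tk its)
  show ?thesis
  proof (cases "j = i")
    case True
    have "its \<le> cntr s" using inv_txok[OF inv \<open>txs s k = Some tk\<close>] begin_retry unfolding txok_def by auto
    then have "real (cntr s) + C * (real (cntr s) - real its) \<ge> real (cntr s)"
      using Cp by simp
    moreover have "cntr s \<ge> 1" using inv unfolding inv_def by simp
    ultimately show ?thesis using ti begin_retry True \<open>its \<le> cntr s\<close> unfolding txok_def by auto
  next
    case False
    then show ?thesis using keep[OF inv st, of j _ t'] ti begin_retry by auto
  qed
next
  case (read_local i t x v)
  then show ?thesis using keep[OF inv st, of j _ t'] ti by auto
next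
  case (read_noprev i t x)
  then show ?thesis using keep[OF inv st, of j _ t'] ti
    by (cases "j = i") (auto simp: upd_tx_def abort_tx_def)
next
  case (write_step i t x v)
  then show ?thesis using keep[OF inv st, of j _ t'] ti
    by (cases "j = i") (auto simp: upd_tx_def)
next
  case (tryc_invalid i t)
  then show ?thesis using keep[OF inv st, of j _ t'] ti
    by (cases "j = i") (auto simp: upd_tx_def abort_tx_def)
next
  case (abort_step i t)
  then show ?thesis using keep[OF inv st, of j _ t'] ti
    by (cases "j = i") (auto simp: upd_tx_def abort_tx_def)
next
  case (read_abort i t x c tl' tu')
  show ?thesis
  proof (cases "j = i")
    case False
    then show ?thesis using keep[OF inv st, of j _ t'] ti read_abort by (auto simp: upd_tx_def)
  next
    case True
    have ok: "txok s t" using inv_txok[OF inv] read_abort by blast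
    have t': "t' = abort_tx (t\<lparr>t_tltl := tl', t_tutl := tu'\<rparr>)" using ti True read_abort by (simp add: upd_tx_def)
    have "committed_gt s' (t_wts t)" if lt: "tu' < t_ct t"
    proof -
      from min_lt[OF lt[unfolded \<open>tu' = _\<close>]] show ?thesis
      proof
        assume "t_tutl t < t_ct t" then show ?thesis using ok step_committed_gt[OF st] unfolding txok_def by blast
      next
        assume "nxt_lim (store s x) (t_wts t) < t_ct t"
        then obtain c' where "c' \<in> store s x" "vts c' > t_wts t" using nxt_lim_fin lt_inf by blast
        then have "committed_gt s (t_wts t)" using store_gt[OF inv] ok unfolding txok_def by blast
        then show ?thesis using step_committed_gt[OF st] by blast
      qed
    qed
    then show ?thesis using ok t' step_cntr[OF st] unfolding txok_def abort_tx_def by auto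
  qed
next
  case (read_ok i t x c tl' tu')
  show ?thesis
  proof (cases "j = i")
    case False
    then show ?thesis using keep[OF inv st, of j _ t'] ti read_ok by (auto simp: upd_tx_def)
  next
    case True
    have ok: "txok s t" using inv_txok[OF inv] read_ok by blast
    have t': "t' = t\<lparr>t_tltl := tl', t_tutl := tu'\<rparr>" using ti True read_ok by (simp add: upd_tx_def)
    have "committed_gt s' (t_wts t)" if lt: "tu' < t_ct t"
    proof -
      from min_lt[OF lt[unfolded \<open>tu' = _\<close>]] show ?thesis
      proof
        assume "t_tutl t < t_ct t" then show ?thesis using ok step_committed_gt[OF st] unfolding txok_def by blast
      next
        assume "nxt_lim (store s x) (t_wts t) < t_ct t"
        then obtain c' where "c' \<in> store s x" "vts c' > t_wts t" using nxt_lim_fin lt_inf by blast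
        then have "committed_gt s (t_wts t)" using store_gt[OF inv] ok unfolding txok_def by blast
        then show ?thesis using step_committed_gt[OF st] by blast
      qed
    qed
    then show ?thesis using ok t' step_cntr[OF st] unfolding txok_def by auto
  qed
next
  case (tryc_abort_early i t S)
  show ?thesis
  proof (cases "j = i")
    case False
    then show ?thesis using keep[OF inv st, of j _ t'] ti tryc_abort_early by (auto simp: upd_tx_def)
  next
    case True
    have ok: "txok s t" using inv_txok[OF inv] tryc_abort_early by blast
    let ?tu = "min (t_tutl t) (hi_lim s S (t_wts t))"
    have t': "t' = abort_tx (t\<lparr>t_tltl := max (t_tltl t) (lo_lim s S (t_wts t)), t_tutl := ?tu\<rparr>)"
      using ti True tryc_abort_early by (simp add: upd_tx_def)
    have "committed_gt s' (t_wts t)" if lt: "?tu < t_ct t"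
    proof -
      from min_lt[OF lt] show ?thesis
      proof
        assume "t_tutl t < t_ct t" then show ?thesis using ok step_committed_gt[OF st] unfolding txok_def by blast
      next
        assume "hi_lim s S (t_wts t) < t_ct t"
        then obtain x c' where "c' \<in> store s x" "vts c' > t_wts t" using hi_lim_fin lt_inf by blast
        then have "committed_gt s (t_wts t)" using store_gt[OF inv] ok unfolding txok_def by blast
        then show ?thesis using step_committed_gt[OF st] by blast
      qed
    qed
    then show ?thesis using ok t' step_cntr[OF st] unfolding txok_def abort_tx_def by auto
  qed
next
  case (tryc_abort_late i t W tl1 ctv tu2)
  show ?thesis
  proof (cases "j = i")
    case False
    then show ?thesis using keep[OF inv st, of j _ t'] ti tryc_abort_late by (auto simp: upd_tx_def)
  next
    case True
    have ok: "txok s t" using inv_txok[OF inv] tryc_abort_late by blast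
    have t': "t' = abort_tx (t\<lparr>t_tltl := tl1, t_tutl := tu2, t_ct := ereal (real ctv)\<rparr>)"
      using ti True tryc_abort_late by (simp add: upd_tx_def)
    have ctinf: "t_ct t = \<infinity>" using ok tryc_abort_late unfolding txok_def by simp
    have "committed_gt s' (t_wts t)" if lt: "tu2 < ereal (real ctv)"
    proof -
      from min_lt[OF lt[unfolded \<open>tu2 = _\<close>]] have
        "t_tutl t < ereal (real ctv) \<or> hi_lim s W (t_wts t) < ereal (real ctv)"
        using min_lt by auto
      then show ?thesis
      proof
        assume "t_tutl t < ereal (real ctv)"
        then have "t_tutl t < \<infinity>" by (rule lt_inf)
        then have "t_tutl t < t_ct t" using ctinf by simp
        then show ?thesis using ok step_committed_gt[OF st] unfolding txok_def by blast
      next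
        assume "hi_lim s W (t_wts t) < ereal (real ctv)"
        then obtain x c' where "c' \<in> store s x" "vts c' > t_wts t" using hi_lim_fin lt_inf by blast
        then have "committed_gt s (t_wts t)" using store_gt[OF inv] ok unfolding txok_def by blast
        then show ?thesis using step_committed_gt[OF st] by blast
      qed
    qed
    then show ?thesis using ok t' step_cntr[OF st] unfolding txok_def abort_tx_def by auto
  qed
next
  case (tryc_commit i t W w tl1 ctv tu2 R M)
  have ci: "txs s' i = Some (t\<lparr>t_tltl := tu2, t_tutl := tu2, t_ct := ereal (real ctv),
                                     t_status := Committed\<rparr>)" using tryc_commit by simp
  have cw: "committed_gt s' x" if "x < w" for x
    using ci that unfolding committed_gt_def \<open>w = t_wts t\<close> by (auto intro!: exI[of _ i])
  show ?thesis
  proof (cases "j = i")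
    case True
    have ok: "txok s t" using inv_txok[OF inv] tryc_commit by blast
    have t': "t' = t\<lparr>t_tltl := tu2, t_tutl := tu2, t_ct := ereal (real ctv), t_status := Committed\<rparr>"
      using ti True ci by simp
    have ctinf: "t_ct t = \<infinity>" using ok tryc_commit unfolding txok_def by simp
    have "committed_gt s' (t_wts t)" if lt: "tu2 < ereal (real ctv)"
    proof -
      from min_lt[OF lt[unfolded \<open>tu2 = _\<close>]] have
        "t_tutl t < ereal (real ctv) \<or> hi_lim s W w < ereal (real ctv)"
        using min_lt by auto
      then show ?thesis
      proof
        assume "t_tutl t < ereal (real ctv)"
        then have "t_tutl t < \<infinity>" by (rule lt_inf)
        then have "t_tutl t < t_ct t" using ctinf by simp
        then show ?thesis using ok step_committed_gt[OF st] unfolding txok_def by blast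
      next
        assume "hi_lim s W w < ereal (real ctv)"
        then obtain x c' where "c' \<in> store s x" "vts c' > t_wts t" using hi_lim_fin lt_inf \<open>w = t_wts t\<close> by blast
        then have "committed_gt s (t_wts t)" using store_gt[OF inv] ok unfolding txok_def by blast
        then show ?thesis using step_committed_gt[OF st] by blast
      qed
    qed
    then show ?thesis using ok t' step_cntr[OF st] unfolding txok_def by auto
  next
    case False
    then obtain tk where tk: "txs s j = Some tk" and t': "t' = tk\<lparr>
                              t_valid := (t_valid tk \<and> j \<notin> M),
                              t_tutl := (if j \<in> R \<and> j \<notin> M \<and> t_wts tk < w \<and> t_status tk \<noteq> Aborted
                                         then min (t_tutl tk) (tu2 - 1) else t_tutl tk)\<rparr>"
      using ti tryc_commit by auto
    have ok: "txok s tk" using inv_txok[OF inv tk] .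
    have f: "t_its t' = t_its tk" "t_wts t' = t_wts tk" "t_ct t' = t_ct tk" "t_status t' = t_status tk"
      using t' by simp_all
    show ?thesis
    proof (cases "j \<in> R \<and> j \<notin> M \<and> t_wts tk < w \<and> t_status tk \<noteq> Aborted")
      case True
      then have "t_wts tk < w" by blast
      then have cg: "committed_gt s' (t_wts t')" using cw f(2) by simp
      have "t_its t' \<le> cntr s'" using ok f(1) step_cntr[OF st] unfolding txok_def by simp
      moreover have "t_wts t' > 0" using ok f(2) unfolding txok_def by simp
      moreover have "t_status t' = Live \<longrightarrow> t_ct t' = \<infinity>" using ok f(3,4) unfolding txok_def by simp
      ultimately show ?thesis using cg unfolding txok_def by blast
    next
      case False
      have "t_tutl t' = t_tutl tk" using t' False by (simp only: if_False) simp
      then show ?thesis using f by (intro keep[OF inv st tk]) simp_all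
    qed
  qed
qed

lemma step_inv:
  assumes inv: "inv s" and Cp: "C > 0" and st: "ksftm_step K C incVal s e s'"
  shows "inv s'"
proof -
  have c: "cntr s' \<ge> 1" using inv step_cntr[OF st] unfolding inv_def by simp
  have f: "\<forall>y. finite (store s' y)" using inv step_finite[OF st] unfolding inv_def by blast
  have t: "\<forall>i t. txs s' i = Some t \<longrightarrow> txok s' t" using step_txs[OF inv Cp st] by blast
  have v: "\<forall>x u. u \<in> store s' x \<longrightarrow> vts u \<le> 0 \<or> committed_eq s' (vts u)"
  proof (intro allI impI)
    fix x u assume u: "u \<in> store s' x"
    have fs: "\<forall>y. finite (store s y)" using inv unfolding inv_def by blast
    from step_store[OF st u fs] show "vts u \<le> 0 \<or> committed_eq s' (vts u)"
    proof
      assume "\<exists>u0\<in>store s x. vts u0 = vts u"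
      then obtain u0 where "u0 \<in> store s x" "vts u0 = vts u" by blast
      then have "vts u \<le> 0 \<or> committed_eq s (vts u)" using inv unfolding inv_def by metis
      then show ?thesis using step_committed_eq[OF st] by blast
    qed blast
  qed
  show ?thesis using c f t v unfolding inv_def txok_def by blast
qed

lemma exec_inv:
  assumes "ksftm_exec K C incVal s0 H s" "inv s0" "C > 0"
  shows "inv s"
  using assms by (induction rule: ksftm_exec.induct) (auto intro: step_inv)

lemma init_inv: "inv (init_state :: ('x, 'v::zero) state)"
  unfolding inv_def init_state_def by simp

theorem lemma15:
  fixes K :: nat and C :: real and incVal :: nat
    and H :: "('x, 'v::zero) event list" and s :: "('x, 'v) state"
  assumes "K \<ge> 1" and "C > 0" and "incVal \<ge> 1"
    and "ksftm_history K C incVal H s"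
    and "txs s i = Some ti"
    and "t_tutl ti < t_ct ti"
  shows "\<exists>j tj. txs s j = Some tj \<and> t_status tj = Committed \<and> t_wts tj > t_wts ti"
proof -
  have "inv s" using exec_inv[OF assms(4)[unfolded ksftm_history_def] init_inv assms(2)] .
  then have "txok s ti" using inv_txok assms(5) by blast
  then show ?thesis using assms(6) unfolding txok_def committed_gt_def by blast
qed

end
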